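(* For any two UEC-representatives $\mathcal{U},\mathcal{U}'$ on vertex set $[n]$ there is a finite sequence of UEC-representatives $\mathcal{U}=\mathcal{U}_0,\mathcal{U}_1,\dots,\mathcal{U}_r=\mathcal{U}'$ such that, for each $t$, some monomial representation of $\mathcal{U}_{t+1}$ is obtained from some monomial representation of $\mathcal{U}_t$ by a single within-fiber, out-of-fiber-add, out-of-fiber-delete, merge, or split move.
   Context: For a DAG $\mathcal{D}$, a trek is a path with no repeated vertices and no collider; the unconditional dependence graph $\mathcal{U}^\mathcal{D}$ has an edge between distinct $v,w$ iff there is a trek between them. A UEC-representative on $[n]$ is an undirected graph equal to $\mathcal{U}^\mathcal{D}$ for some DAG $\mathcal{D}$ on $[n]$. A monomial $x_{i_1|A_1}\cdots x_{i_k|A_k}$ (distinct $i_1,\dots,i_k\in[n]$, $A_j\subseteq[n]$, with $i_l\notin A_j$ for all $l,j$, and $\bigcup_j(\{i_j\}\cup A_j)=[n]$) determines the graph on $[n]$ in which distinct $v,w$ are adjacent iff both lie in some $\{i_j\}\cup A_j$; it is a monomial representation of a graph $\mathcal{U}$ if it determines $\mathcal{U}$ (for a UEC-representative, taking $\{i_1,\dots,i_k\}$ any maximum independent set and $A_j=\mathrm{ne}_\mathcal{U}(i_j)$ gives one). Moves on a monomial representation: within-fiber: replace a factor $x_{i|A}x_{j|B}$ by $x_{i|A\cup C}x_{j|B\setminus C}$ where $C\subseteq B\setminus A$; out-of-fiber-add: replace $x_{i_1|A_1}x_{i_2|A_2}$ by $x_{i_1|A_1}x_{i_2|A_2\cup\{c\}}$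 with $c\in A_1\setminus A_2$; out-of-fiber-delete: replace $x_{i_1|A_1}x_{i_2|A_2}$ by $x_{i_1|A_1}x_{i_2|A_2\setminus\{c\}}$ with $c\in A_1\cap A_2$; merge: replace $x_{i_1|A}x_{i_2|A}$ by $x_{i_1|A\cup\{i_2\}}$; split: if $c\in A_1$ and $c\notin A_j$ for all $j\neq1$, replace $x_{i_1|A_1}$ by $x_{i_1|A_1\setminus\{c\}}x_{c|A_1\setminus\{c\}}$. *)

theory Defs
  imports Main
begin

text \<open>Vertex set [n] = {1..n}. A DAG on [n] is a set of directed edges (a,b), meaning a -> b,
  between vertices of [n], that is acyclic.\<close>

definition is_DAG :: "nat \<Rightarrow> (nat \<times> nat) set \<Rightarrow> bool" where
  "is_DAG n D \<longleftrightarrow> D \<subseteq> {1..n} \<times> {1..n} \<and> acyclic D"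

definition is_trek :: "(nat \<times> nat) set \<Rightarrow> nat list \<Rightarrow> bool" where
  "is_trek D p \<longleftrightarrow> p \<noteq> [] \<and> distinct p
     \<and> (\<forall>i. Suc i < length p \<longrightarrow> (p ! i, p ! Suc i) \<in> D \<or> (p ! Suc i, p ! i) \<in> D)
     \<and> (\<forall>i. 0 < i \<and> Suc i < length p \<longrightarrow>
            \<not> ((p ! (i - 1), p ! i) \<in> D \<and> (p ! Suc i, p ! i) \<in> D))"

text \<open>Undirected graphs on [n] are represented by their edge sets (sets of 2-element subsets).\<close>

definition udg :: "nat \<Rightarrow> (nat \<times> nat) set \<Rightarrow> nat set set" where
  "udg n D = {{v, w} | v w. v \<in> {1..n} \<and> w \<in> {1..n} \<and> v \<noteq> w
                \<and> (\<exists>p. is_trek D p \<and> hd p = v \<and> last p = w)}"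

definition UEC_rep :: "nat \<Rightarrow> nat set set \<Rightarrow> bool" where
  "UEC_rep n U \<longleftrightarrow> (\<exists>D. is_DAG n D \<and> U = udg n D)"

text \<open>A monomial x_{i_1|A_1}...x_{i_k|A_k} is represented by the finite set of its factors
  (i_j, A_j); the heads i_j are pairwise distinct.\<close>

definition valid_monomial :: "nat \<Rightarrow> (nat \<times> nat set) set \<Rightarrow> bool" where
  "valid_monomial n M \<longleftrightarrow> finite M
     \<and> (\<forall>(i, A)\<in>M. \<forall>(j, B)\<in>M. i = j \<longrightarrow> A = B)
     \<and> (\<forall>(i, A)\<in>M. \<forall>(j, B)\<in>M. i \<notin> B)
     \<and> (\<Union>(i, A)\<in>M. insert i A) = {1..n}"

definition monomial_graph :: "(nat \<times> nat set) set \<Rightarrow> nat set set" where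
  "monomial_graph M = {{v, w} | v w. v \<noteq> w \<and> (\<exists>(i, A)\<in>M. v \<in> insert i A \<and> w \<in> insert i A)}"

definition monomial_rep :: "nat \<Rightarrow> (nat \<times> nat set) set \<Rightarrow> nat set set \<Rightarrow> bool" where
  "monomial_rep n M U \<longleftrightarrow> valid_monomial n M \<and> monomial_graph M = U"

definition within_fiber :: "(nat \<times> nat set) set \<Rightarrow> (nat \<times> nat set) set \<Rightarrow> bool" where
  "within_fiber M M' \<longleftrightarrow> (\<exists>i A j B C. (i, A) \<in> M \<and> (j, B) \<in> M \<and> i \<noteq> j \<and> C \<subseteq> B - A
     \<and> M' = (M - {(i, A), (j, B)}) \<union> {(i, A \<union> C), (j, B - C)})"

definition out_fiber_add :: "(nat \<times> nat set) set \<Rightarrow> (nat \<times> nat set) set \<Rightarrow> bool" where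
  "out_fiber_add M M' \<longleftrightarrow> (\<exists>i1 A1 i2 A2 c. (i1, A1) \<in> M \<and> (i2, A2) \<in> M \<and> i1 \<noteq> i2
     \<and> c \<in> A1 - A2 \<and> M' = (M - {(i2, A2)}) \<union> {(i2, insert c A2)})"

definition out_fiber_delete :: "(nat \<times> nat set) set \<Rightarrow> (nat \<times> nat set) set \<Rightarrow> bool" where
  "out_fiber_delete M M' \<longleftrightarrow> (\<exists>i1 A1 i2 A2 c. (i1, A1) \<in> M \<and> (i2, A2) \<in> M \<and> i1 \<noteq> i2
     \<and> c \<in> A1 \<inter> A2 \<and> M' = (M - {(i2, A2)}) \<union> {(i2, A2 - {c})})"

definition merge_move :: "(nat \<times> nat set) set \<Rightarrow> (nat \<times> nat set) set \<Rightarrow> bool" where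
  "merge_move M M' \<longleftrightarrow> (\<exists>i1 i2 A. (i1, A) \<in> M \<and> (i2, A) \<in> M \<and> i1 \<noteq> i2
     \<and> M' = (M - {(i1, A), (i2, A)}) \<union> {(i1, insert i2 A)})"

definition split_move :: "(nat \<times> nat set) set \<Rightarrow> (nat \<times> nat set) set \<Rightarrow> bool" where
  "split_move M M' \<longleftrightarrow> (\<exists>i1 A1 c. (i1, A1) \<in> M \<and> c \<in> A1
     \<and> (\<forall>(j, B)\<in>M. j \<noteq> i1 \<longrightarrow> c \<notin> B)
     \<and> M' = (M - {(i1, A1)}) \<union> {(i1, A1 - {c}), (c, A1 - {c})})"

definition single_move :: "(nat \<times> nat set) set \<Rightarrow> (nat \<times> nat set) set \<Rightarrow> bool" where
  "single_move M M' \<longleftrightarrow> within_fiber M M' \<or> out_fiber_add M M' \<or> out_fiber_delete M M'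
     \<or> merge_move M M' \<or> split_move M M'"

end

theory Submission
  imports Defs
begin


definition edgesP :: "(nat \<times> nat) set \<Rightarrow> nat list \<Rightarrow> bool" where
  "edgesP D p \<longleftrightarrow> (\<forall>i. Suc i < length p \<longrightarrow> (p ! i, p ! Suc i) \<in> D \<or> (p ! Suc i, p ! i) \<in> D)"
definition nocoll :: "(nat \<times> nat) set \<Rightarrow> nat list \<Rightarrow> bool" where
  "nocoll D p \<longleftrightarrow> (\<forall>i. 0 < i \<and> Suc i < length p \<longrightarrow>
            \<not> ((p ! (i - 1), p ! i) \<in> D \<and> (p ! Suc i, p ! i) \<in> D))"

lemma trek_struct:
  "p \<noteq> [] \<Longrightarrow> edgesP D p \<Longrightarrow> nocoll D p \<Longrightarrow>
   (hd p, last p) \<in> D\<^sup>* \<or> ((\<exists>t. (t, hd p) \<in> D\<^sup>* \<and> (t, last p) \<in> D\<^sup>*) \<and> length p \<ge> 2 \<and> (p!1, p!0) \<in> D)"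
proof (induction p)
  case Nil then show ?case by simp
next
  case (Cons x q)
  show ?case
  proof (cases "q = []")
    case True then show ?thesis by simp
  next
    case False
    have eq: "edgesP D q" using Cons.prems(2) unfolding edgesP_def
    proof (intro allI impI)
      fix i assume "Suc i < length q"
      then have "Suc (Suc i) < length (x#q)" by simp
      then show "(q ! i, q ! Suc i) \<in> D \<or> (q ! Suc i, q ! i) \<in> D"
        using Cons.prems(2) unfolding edgesP_def by (metis nth_Cons_Suc)
    qed
    have nq: "nocoll D q" unfolding nocoll_def
    proof (intro allI impI)
      fix i assume a: "0 < i \<and> Suc i < length q"
      then have "0 < Suc i \<and> Suc (Suc i) < length (x#q)" by simp
      then have "\<not> (((x#q) ! (Suc i - 1), (x#q) ! Suc i) \<in> D \<and> ((x#q) ! Suc (Suc i), (x#q) ! Suc i) \<in> D)"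
        using Cons.prems(3) unfolding nocoll_def by blast
      moreover have "(x#q) ! (Suc i - 1) = q ! (i - 1)" using a by (cases i) auto
      ultimately show "\<not> ((q ! (i - 1), q ! i) \<in> D \<and> (q ! Suc i, q ! i) \<in> D)" by simp
    qed
    note IH = Cons.IH[OF False eq nq]
    have hq: "hd q = q ! 0" using False by (simp add: hd_conv_nth)
    have lq: "last (x#q) = last q" using False by simp
    have e0: "(x, q!0) \<in> D \<or> (q!0, x) \<in> D"
      using Cons.prems(2) False unfolding edgesP_def by (metis length_Cons length_greater_0_conv nth_Cons_0 nth_Cons_Suc Suc_less_eq)
    show ?thesis
    proof (cases "(q!0, x) \<in> D")
      case True
      from IH obtain t where "(t, hd q) \<in> D\<^sup>*" "(t, last q) \<in> D\<^sup>*" by blast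
      then have "(t, x) \<in> D\<^sup>*" using True hq by (metis rtrancl.rtrancl_into_rtrancl)
      then show ?thesis using True False lq \<open>(t, last q) \<in> D\<^sup>*\<close>
        by (auto simp: Suc_le_eq)
    next
      case nt: False
      with e0 have xq: "(x, q!0) \<in> D" by blast
      have "\<not> ((q!1, q!0) \<in> D \<and> length q \<ge> 2)"
      proof
        assume h: "(q!1, q!0) \<in> D \<and> length q \<ge> 2"
        then have "0 < (1::nat) \<and> Suc 1 < length (x#q)" by simp
        then have "\<not> (((x#q) ! (1 - 1), (x#q) ! 1) \<in> D \<and> ((x#q) ! Suc 1, (x#q) ! 1) \<in> D)"
          using Cons.prems(3) unfolding nocoll_def by blast
        then show False using h xq by simp
      qed
      with IH have "(hd q, last q) \<in> D\<^sup>*" by blast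
      then have "(x, last q) \<in> D\<^sup>*" using xq hq by (metis converse_rtrancl_into_rtrancl)
      then show ?thesis using lq by simp
    qed
  qed
qed

lemma trek_anc: "is_trek D p \<Longrightarrow> \<exists>t. (t, hd p) \<in> D\<^sup>* \<and> (t, last p) \<in> D\<^sup>*"
  using trek_struct[of p D] unfolding is_trek_def edgesP_def nocoll_def by blast



definition chainP :: "(nat \<times> nat) set \<Rightarrow> nat list \<Rightarrow> bool" where
  "chainP D xs \<longleftrightarrow> (\<forall>i. Suc i < length xs \<longrightarrow> (xs ! i, xs ! Suc i) \<in> D)"

lemma rtrancl_chain: "(t, v) \<in> D\<^sup>* \<Longrightarrow> \<exists>xs. xs \<noteq> [] \<and> hd xs = t \<and> last xs = v \<and> chainP D xs"
proof (induction rule: rtrancl_induct)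
  case base then show ?case by (intro exI[of _ "[t]"]) (simp add: chainP_def)
next
  case (step y z)
  then obtain xs where xs: "xs \<noteq> []" "hd xs = t" "last xs = y" "chainP D xs" by blast
  have "chainP D (xs @ [z])" unfolding chainP_def
  proof (intro allI impI)
    fix i assume i: "Suc i < length (xs @ [z])"
    show "((xs @ [z]) ! i, (xs @ [z]) ! Suc i) \<in> D"
    proof (cases "Suc i < length xs")
      case True then show ?thesis using xs(4) by (simp add: chainP_def nth_append)
    next
      case False
      then have "Suc i = length xs" using i by simp
      then have "xs ! i = y" using xs by (metis diff_Suc_1 last_conv_nth)
      then show ?thesis using \<open>Suc i = length xs\<close> step(2) by (simp add: nth_append)
    qed
  qed
  then show ?case using xs by (intro exI[of _ "xs @ [z]"]) simp
qed

lemma chain_trancl: "chainP D xs \<Longrightarrow> a < b \<Longrightarrow> b < length xs \<Longrightarrow> (xs!a, xs!b) \<in> D\<^sup>+"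
proof (induction b)
  case 0 then show ?case by simp
next
  case (Suc b)
  have e: "(xs!b, xs!Suc b) \<in> D" using Suc.prems unfolding chainP_def by blast
  show ?case
  proof (cases "a = b")
    case True then show ?thesis using e by auto
  next
    case False
    then have "(xs!a, xs!b) \<in> D\<^sup>+" using Suc by simp
    then show ?thesis using e by (meson trancl.trancl_into_trancl)
  qed
qed

lemma chain_distinct: "acyclic D \<Longrightarrow> chainP D xs \<Longrightarrow> distinct xs"
  unfolding distinct_conv_nth
proof (intro allI impI)
  fix i j assume a: "acyclic D" "chainP D xs" "i < length xs" "j < length xs" "i \<noteq> j"
  show "xs ! i \<noteq> xs ! j"
  proof
    assume eq: "xs ! i = xs ! j"
    show False
    proof (cases "i < j")
      case True then show False using chain_trancl[OF a(2) True a(4)] eq a(1)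
        by (simp add: acyclic_def)
    next
      case False then have "j < i" using a by simp
      then show False using chain_trancl[OF a(2) \<open>j < i\<close> a(3)] eq a(1) by (simp add: acyclic_def)
    qed
  qed
qed

lemma chain_drop: "chainP D xs \<Longrightarrow> chainP D (drop a xs)"
  unfolding chainP_def by simp

lemma rev_tl_nth:
  assumes "P \<noteq> []" "Q \<noteq> []" "P!0 = Q!0" "i < length P + length Q - 1"
  shows "(rev P @ tl Q) ! i = (if i < length P then P ! (length P - 1 - i) else Q ! (i + 1 - length P))"
  using assms by (auto simp: nth_append rev_nth nth_tl Suc_diff_le)


lemma anc_trek:
  assumes dag: "acyclic D" and tv: "(t, v) \<in> D\<^sup>*" and tw: "(t, w) \<in> D\<^sup>*"
  shows "\<exists>p. is_trek D p \<and> hd p = v \<and> last p = w"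
proof -
  define S where "S = {(P, Q). P \<noteq> [] \<and> Q \<noteq> [] \<and> hd P = hd Q \<and> last P = v \<and> last Q = w \<and> chainP D P \<and> chainP D Q}"
  obtain P0 Q0 where "(P0, Q0) \<in> S"
  proof -
    obtain P0 where "P0 \<noteq> []" "hd P0 = t" "last P0 = v" "chainP D P0" using rtrancl_chain[OF tv] by blast
    moreover obtain Q0 where "Q0 \<noteq> []" "hd Q0 = t" "last Q0 = w" "chainP D Q0" using rtrancl_chain[OF tw] by blast
    ultimately show thesis using that[of P0 Q0] unfolding S_def by simp
  qed
  then obtain PQ where PQ: "PQ \<in> S" and minPQ: "\<forall>y. y \<in> S \<longrightarrow> (\<lambda>(P,Q). length P + length Q) PQ \<le> (\<lambda>(P,Q). length P + length Q) y"
    using ex_has_least_nat[of "\<lambda>x. x \<in> S" "(P0,Q0)" "\<lambda>(P,Q). length P + length Q"] by blast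
  obtain P Q where pq: "PQ = (P, Q)" by (cases PQ)
  have S1: "P \<noteq> []" "Q \<noteq> []" "hd P = hd Q" "last P = v" "last Q = w" "chainP D P" "chainP D Q"
    using PQ pq unfolding S_def by auto
  have minl: "\<And>P' Q'. (P', Q') \<in> S \<Longrightarrow> length P + length Q \<le> length P' + length Q'"
    using minPQ pq by fastforce
  have disj: "a = 0 \<and> b = 0" if "a < length P" "b < length Q" "P ! a = Q ! b" for a b
  proof -
    have "(drop a P, drop b Q) \<in> S" unfolding S_def using that S1
      by (simp add: hd_drop_conv_nth chain_drop)
    from minl[OF this] that show ?thesis by simp linarith
  qed
  have h0: "P!0 = Q!0" using S1 by (simp add: hd_conv_nth)
  define L where "L = rev P @ tl Q"
  define m where "m = length P"
  have lenL: "length L = m + length Q - 1" unfolding L_def m_def using S1 by (cases Q) auto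
  have Lnth: "\<And>i. i < length L \<Longrightarrow> L ! i = (if i < m then P ! (m - 1 - i) else Q ! (i + 1 - m))"
    unfolding L_def m_def using rev_tl_nth[OF S1(1,2) h0] lenL L_def m_def by simp
  have distP: "distinct P" and distQ: "distinct Q" using chain_distinct dag S1 by auto
  have distL: "distinct L" unfolding L_def
  proof (simp add: distP distinct_tl distQ, rule ccontr)
    assume "set P \<inter> set (tl Q) \<noteq> {}"
    then obtain x where x: "x \<in> set P" "x \<in> set (tl Q)" by blast
    then obtain a where a: "a < length P" "P ! a = x" by (auto simp: in_set_conv_nth)
    from x obtain b where b: "b < length (tl Q)" "tl Q ! b = x" by (auto simp: in_set_conv_nth)
    have "Suc b < length Q" "Q ! Suc b = x" using b S1 by (auto simp: nth_tl)
    then show False using disj[of a "Suc b"] a by simp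
  qed
  have nocyc: "\<And>x y. (x, y) \<in> D \<Longrightarrow> (y, x) \<notin> D"
    using dag unfolding acyclic_def by (meson trancl.r_into_trancl trancl_into_trancl)
  have bk: "(L ! Suc i, L ! i) \<in> D" if "i < m - 1" "Suc i < length L" for i
  proof -
    have "L ! i = P ! (m - 1 - i)" using Lnth[of i] that by auto
    moreover have "L ! Suc i = P ! (m - 2 - i)"
    proof (cases "Suc i < m")
      case True then show ?thesis using Lnth that by simp
    next
      case False then have "Suc i = m" using that by simp
      then show ?thesis using Lnth[of "Suc i"] that h0 by simp
    qed
    moreover have "Suc (m - 2 - i) = m - 1 - i" "m - 1 - i < length P" using that m_def by auto
    ultimately show ?thesis using S1(6) unfolding chainP_def by metis
  qed
  have fw: "(L ! i, L ! Suc i) \<in> D" if "m - 1 \<le> i" "Suc i < length L" for i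
  proof -
    have li: "L ! i = Q ! (i + 1 - m)"
    proof (cases "i < m")
      case True then have "i = m - 1" using that by simp
      then show ?thesis using Lnth[of i] that h0 S1 m_def by simp
    next
      case False then show ?thesis using Lnth that by simp
    qed
    have "L ! Suc i = Q ! (Suc i + 1 - m)" using Lnth[of "Suc i"] that h0 by auto
    moreover have "Suc i + 1 - m = Suc (i + 1 - m)" "Suc (i + 1 - m) < length Q"
      using that lenL m_def S1 by auto
    ultimately show ?thesis using li S1(7) unfolding chainP_def by metis
  qed
  have trek: "is_trek D L" unfolding is_trek_def
  proof (intro conjI allI impI)
    show "L \<noteq> []" unfolding L_def using S1 by simp
    show "distinct L" by (fact distL)
    fix i
    show "Suc i < length L \<Longrightarrow> (L ! i, L ! Suc i) \<in> D \<or> (L ! Suc i, L ! i) \<in> D"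
      using bk fw by (cases "i < m - 1") auto
    show "0 < i \<and> Suc i < length L \<Longrightarrow> \<not> ((L ! (i - 1), L ! i) \<in> D \<and> (L ! Suc i, L ! i) \<in> D)"
    proof
      assume a: "0 < i \<and> Suc i < length L" and c: "(L ! (i - 1), L ! i) \<in> D \<and> (L ! Suc i, L ! i) \<in> D"
      show False
      proof (cases "i < m - 1")
        case True
        then have "(L ! Suc (i - 1), L ! (i - 1)) \<in> D" using bk[of "i - 1"] a by simp
        then show False using a c nocyc by simp
      next
        case False
        then show False using fw[of i] a c nocyc by auto
      qed
    qed
  qed
  have "hd L = v" unfolding L_def using S1 by (simp add: hd_rev)
  moreover have "last L = w"
  proof (cases "tl Q = []")
    case True
    then have "Q = [hd Q]" using S1 by (cases Q) auto
    then show ?thesis unfolding L_def using True S1 by (metis append_Nil2 last.simps last_rev)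
  next
    case False then show ?thesis unfolding L_def using S1 by (simp add: last_tl)
  qed
  ultimately show ?thesis using trek by blast
qed



lemma udg_char:
  assumes "is_DAG n D"
  shows "udg n D = {{v, w} | v w. v \<in> {1..n} \<and> w \<in> {1..n} \<and> v \<noteq> w
                \<and> (\<exists>t. (t, v) \<in> D\<^sup>* \<and> (t, w) \<in> D\<^sup>*)}"
proof -
  have ac: "acyclic D" using assms unfolding is_DAG_def by blast
  have eq: "(\<exists>p. is_trek D p \<and> hd p = v \<and> last p = w) \<longleftrightarrow> (\<exists>t. (t, v) \<in> D\<^sup>* \<and> (t, w) \<in> D\<^sup>*)" for v w
  proof
    assume "\<exists>p. is_trek D p \<and> hd p = v \<and> last p = w"
    then obtain p where "is_trek D p" "hd p = v" "last p = w" by blast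
    then show "\<exists>t. (t, v) \<in> D\<^sup>* \<and> (t, w) \<in> D\<^sup>*" using trek_anc by blast
  next
    assume "\<exists>t. (t, v) \<in> D\<^sup>* \<and> (t, w) \<in> D\<^sup>*"
    then obtain t where "(t, v) \<in> D\<^sup>*" "(t, w) \<in> D\<^sup>*" by blast
    then show "\<exists>p. is_trek D p \<and> hd p = v \<and> last p = w" using anc_trek[OF ac] by blast
  qed
  show ?thesis unfolding udg_def eq ..
qed

definition srcs :: "nat \<Rightarrow> (nat \<times> nat) set \<Rightarrow> nat set" where
  "srcs n D = {s \<in> {1..n}. \<forall>u. (u, s) \<notin> D}"

lemma source_anc:
  assumes "is_DAG n D" "(t, v) \<in> D\<^sup>*" "v \<in> {1..n}"
  shows "\<exists>s \<in> srcs n D. (s, v) \<in> D\<^sup>*"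
proof -
  have fin: "finite D" using assms(1) unfolding is_DAG_def
    using finite_subset by blast
  have wf: "wf D" using finite_acyclic_wf[OF fin] assms(1) unfolding is_DAG_def by blast
  obtain z where z: "z \<in> {u. (u, v) \<in> D\<^sup>*}" "\<And>y. (y, z) \<in> D \<Longrightarrow> y \<notin> {u. (u, v) \<in> D\<^sup>*}"
    using wfE_min[OF wf, of t "{u. (u, v) \<in> D\<^sup>*}"] assms(2) by blast
  have src: "\<forall>u. (u, z) \<notin> D"
  proof (intro allI notI)
    fix u assume "(u, z) \<in> D"
    moreover have "(z, v) \<in> D\<^sup>*" using z(1) by simp
    ultimately have "(u, v) \<in> D\<^sup>*" by (rule converse_rtrancl_into_rtrancl)
    then show False using z(2)[OF \<open>(u, z) \<in> D\<close>] by simp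
  qed
  have "z \<in> {1..n}"
  proof (cases "z = v")
    case True then show ?thesis using assms by simp
  next
    case False
    have "(z, v) \<in> D\<^sup>*" using z(1) by simp
    then obtain y where "(z, y) \<in> D" using False by (cases rule: converse_rtranclE) auto
    then show ?thesis using assms(1) unfolding is_DAG_def by blast
  qed
  then show ?thesis using src z(1) unfolding srcs_def by blast
qed

lemma UEC_to_mono:
  assumes "UEC_rep n U"
  shows "\<exists>M. valid_monomial n M \<and> monomial_graph M = U"
proof -
  obtain D where D: "is_DAG n D" "U = udg n D" using assms unfolding UEC_rep_def by blast
  have Dsub: "D \<subseteq> {1..n} \<times> {1..n}" using D unfolding is_DAG_def by blast
  define M where "M = (\<lambda>s. (s, {v. (s, v) \<in> D\<^sup>+})) ` srcs n D"
  have ins: "insert s {v. (s, v) \<in> D\<^sup>+} = {v. (s, v) \<in> D\<^sup>*}" for s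
    by (auto simp: rtrancl_eq_or_trancl)
  have memb: "v \<in> insert s {v. (s, v) \<in> D\<^sup>+} \<longleftrightarrow> (s, v) \<in> D\<^sup>*" for s v
    using ins by blast
  have inn: "v \<in> {1..n}" if "(s, v) \<in> D\<^sup>*" "s \<in> {1..n}" for s v
    using that(1) by (cases rule: rtranclE) (use that Dsub in auto)
  have inn': "(s, v) \<in> D\<^sup>+ \<Longrightarrow> s \<in> {1..n} \<Longrightarrow> v \<in> {1..n}" for s v
    by (rule inn[OF trancl_into_rtrancl])
  have valid: "valid_monomial n M" unfolding valid_monomial_def
  proof (intro conjI)
    show "finite M" unfolding M_def srcs_def by simp
    show "\<forall>(i, A)\<in>M. \<forall>(j, B)\<in>M. i = j \<longrightarrow> A = B" unfolding M_def by auto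
    show "\<forall>(i, A)\<in>M. \<forall>(j, B)\<in>M. i \<notin> B" unfolding M_def srcs_def
      by (auto dest: tranclD2)
    show "(\<Union>(i, A)\<in>M. insert i A) = {1..n}"
    proof
      show "(\<Union>(i, A)\<in>M. insert i A) \<subseteq> {1..n}" unfolding M_def srcs_def using inn' by auto
      show "{1..n} \<subseteq> (\<Union>(i, A)\<in>M. insert i A)"
      proof
        fix v assume v: "v \<in> {1..n}"
        then obtain s where "s \<in> srcs n D" "(s, v) \<in> D\<^sup>*" using source_anc[OF D(1) rtrancl_refl v] by blast
        then have "v \<in> insert s {v. (s, v) \<in> D\<^sup>+}" "(s, {v. (s, v) \<in> D\<^sup>+}) \<in> M"
          using memb[of v s] unfolding M_def by auto
        then show "v \<in> (\<Union>(i, A)\<in>M. insert i A)" by blast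
      qed
    qed
  qed
  have "monomial_graph M = udg n D" unfolding udg_char[OF D(1)] monomial_graph_def
  proof (intro Collect_cong ex_cong1 ex_cong1 iffI)
    fix x v w
    assume "x = {v, w} \<and> v \<noteq> w \<and> (\<exists>(i, A)\<in>M. v \<in> insert i A \<and> w \<in> insert i A)"
    then obtain i A where iA: "(i, A) \<in> M" "v \<in> insert i A" "w \<in> insert i A" "x = {v, w}" "v \<noteq> w" by blast
    then obtain s where s: "s \<in> srcs n D" "i = s" "A = {v. (s, v) \<in> D\<^sup>+}" unfolding M_def by blast
    have sv: "(s, v) \<in> D\<^sup>*" "(s, w) \<in> D\<^sup>*" using iA s memb by auto
    have sn: "s \<in> {1..n}" using s unfolding srcs_def by blast
    show "x = {v, w} \<and> v \<in> {1..n} \<and> w \<in> {1..n} \<and> v \<noteq> w \<and> (\<exists>t. (t, v) \<in> D\<^sup>* \<and> (t, w) \<in> D\<^sup>*)"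
      using iA(4,5) sv inn[OF sv(1) sn] inn[OF sv(2) sn] by blast
  next
    fix x v w
    assume a: "x = {v, w} \<and> v \<in> {1..n} \<and> w \<in> {1..n} \<and> v \<noteq> w \<and> (\<exists>t. (t, v) \<in> D\<^sup>* \<and> (t, w) \<in> D\<^sup>*)"
    then obtain t where t: "(t, v) \<in> D\<^sup>*" "(t, w) \<in> D\<^sup>*" by blast
    have "t \<in> {1..n}"
      using t(1) by (cases rule: converse_rtranclE) (use a Dsub in auto)
    then obtain s where s: "s \<in> srcs n D" "(s, t) \<in> D\<^sup>*" using source_anc[OF D(1) rtrancl_refl] by blast
    then have m12: "(s, v) \<in> D\<^sup>*" "(s, w) \<in> D\<^sup>*" using t by (meson rtrancl_trans)+
    have m3: "(s, {v. (s, v) \<in> D\<^sup>+}) \<in> M" unfolding M_def using s(1) by (rule imageI)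
    show "x = {v, w} \<and> v \<noteq> w \<and> (\<exists>(i, A)\<in>M. v \<in> insert i A \<and> w \<in> insert i A)"
    proof -
      note m = m12 m3
      have "v \<in> insert s {v. (s, v) \<in> D\<^sup>+}" "w \<in> insert s {v. (s, v) \<in> D\<^sup>+}"
        using m(1,2) memb[of v s] memb[of w s] by simp_all
      then have ex: "\<exists>(i, A)\<in>M. v \<in> insert i A \<and> w \<in> insert i A"
        by (intro bexI[OF _ m3]) (simp only: prod.case)
      from a have "x = {v, w}" "v \<noteq> w" by simp_all
      with ex show ?thesis by (intro conjI)
    qed
  qed
  then show ?thesis using valid D by blast
qed



definition DM :: "(nat \<times> nat set) set \<Rightarrow> (nat \<times> nat) set" where
  "DM M = {(i, a). \<exists>A. (i, A) \<in> M \<and> a \<in> A}"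

lemma valid_uh: "valid_monomial n M \<Longrightarrow> (i, A) \<in> M \<Longrightarrow> (i, B) \<in> M \<Longrightarrow> A = B"
  unfolding valid_monomial_def by (simp add: Ball_def case_prod_beta)
lemma valid_hn: "valid_monomial n M \<Longrightarrow> (i, A) \<in> M \<Longrightarrow> (j, B) \<in> M \<Longrightarrow> i \<notin> B"
  unfolding valid_monomial_def by (simp add: Ball_def case_prod_beta) blast
lemma valid_un: "valid_monomial n M \<Longrightarrow> (\<Union>(i, A)\<in>M. insert i A) = {1..n}"
  unfolding valid_monomial_def by (elim conjE)
lemma valid_cov1: "valid_monomial n M \<Longrightarrow> (i, A) \<in> M \<Longrightarrow> insert i A \<subseteq> {1..n}"
  using UN_upper[of "(i, A)" M "\<lambda>(i, A). insert i A"] valid_un by fastforce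
lemma valid_cov2: "valid_monomial n M \<Longrightarrow> v \<in> {1..n} \<Longrightarrow> \<exists>i A. (i, A) \<in> M \<and> v \<in> insert i A"
  using valid_un[of n M] by (metis (no_types, lifting) UN_E case_prod_conv surj_pair)

lemma DM_trancl:
  assumes "valid_monomial n M" "(x, y) \<in> (DM M)\<^sup>+"
  shows "(x, y) \<in> DM M"
  using assms(2)
proof (induction rule: trancl_induct)
  case (base y) then show ?case .
next
  case (step y z)
  obtain A where A: "(x, A) \<in> M" "y \<in> A" using step(3) unfolding DM_def by blast
  obtain B where B: "(y, B) \<in> M" using step(2) unfolding DM_def by blast
  show ?case using valid_hn[OF assms(1) B A(1)] A(2) by contradiction
qed

lemma DM_rtrancl:
  assumes "valid_monomial n M"
  shows "(x, y) \<in> (DM M)\<^sup>* \<longleftrightarrow> x = y \<or> (x, y) \<in> DM M"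
proof
  assume "(x, y) \<in> (DM M)\<^sup>*"
  then show "x = y \<or> (x, y) \<in> DM M" unfolding rtrancl_eq_or_trancl using DM_trancl[OF assms] by blast
next
  assume "x = y \<or> (x, y) \<in> DM M"
  then show "(x, y) \<in> (DM M)\<^sup>*" by auto
qed

lemma mono_UEC:
  assumes val: "valid_monomial n M"
  shows "UEC_rep n (monomial_graph M)"
proof -
  have dag: "is_DAG n (DM M)" unfolding is_DAG_def
  proof
    show "DM M \<subseteq> {1..n} \<times> {1..n}"
    proof
      fix p assume "p \<in> DM M"
      then obtain i a A where "p = (i, a)" "(i, A) \<in> M" "a \<in> A" unfolding DM_def by blast
      then show "p \<in> {1..n} \<times> {1..n}" using valid_cov1[OF val] by blast
    qed
    show "acyclic (DM M)" unfolding acyclic_def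
    proof (intro allI notI)
      fix x assume "(x, x) \<in> (DM M)\<^sup>+"
      then have "(x, x) \<in> DM M" by (rule DM_trancl[OF val])
      then obtain A where "(x, A) \<in> M" "x \<in> A" unfolding DM_def by blast
      then show False using valid_hn[OF val] by blast
    qed
  qed
  have key: "(v \<in> {1..n} \<and> w \<in> {1..n} \<and> v \<noteq> w \<and> (\<exists>t. (t, v) \<in> (DM M)\<^sup>* \<and> (t, w) \<in> (DM M)\<^sup>*))
       \<longleftrightarrow> (v \<noteq> w \<and> (\<exists>(i, A)\<in>M. v \<in> insert i A \<and> w \<in> insert i A))" for v w
  proof
    assume a: "v \<in> {1..n} \<and> w \<in> {1..n} \<and> v \<noteq> w \<and> (\<exists>t. (t, v) \<in> (DM M)\<^sup>* \<and> (t, w) \<in> (DM M)\<^sup>*)"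
    then obtain t where t: "t = v \<or> (t, v) \<in> DM M" "t = w \<or> (t, w) \<in> DM M"
      using DM_rtrancl[OF val] by blast
    have "\<exists>i A. (i, A) \<in> M \<and> v \<in> insert i A \<and> w \<in> insert i A"
    proof (cases "t = v")
      case True
      then have "(v, w) \<in> DM M" using t a by auto
      then obtain A where "(v, A) \<in> M" "w \<in> A" unfolding DM_def by blast
      then show ?thesis by blast
    next
      case False
      then obtain A where A: "(t, A) \<in> M" "v \<in> A" using t unfolding DM_def by blast
      show ?thesis
      proof (cases "t = w")
        case True then show ?thesis using A by blast
      next
        case False
        then obtain B where B: "(t, B) \<in> M" "w \<in> B" using t unfolding DM_def by blast
        have "A = B" using valid_uh[OF val A(1) B(1)] .
        then show ?thesis using A B by blast
      qed
    qed
    then show "v \<noteq> w \<and> (\<exists>(i, A)\<in>M. v \<in> insert i A \<and> w \<in> insert i A)" using a by blast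
  next
    assume a: "v \<noteq> w \<and> (\<exists>(i, A)\<in>M. v \<in> insert i A \<and> w \<in> insert i A)"
    then obtain i A where iA: "(i, A) \<in> M" "v \<in> insert i A" "w \<in> insert i A" by blast
    have "(i, v) \<in> (DM M)\<^sup>*" "(i, w) \<in> (DM M)\<^sup>*"
      using iA unfolding DM_rtrancl[OF val] by (auto simp: DM_def)
    moreover have "v \<in> {1..n}" "w \<in> {1..n}" using valid_cov1[OF val iA(1)] iA by auto
    ultimately show "v \<in> {1..n} \<and> w \<in> {1..n} \<and> v \<noteq> w \<and> (\<exists>t. (t, v) \<in> (DM M)\<^sup>* \<and> (t, w) \<in> (DM M)\<^sup>*)"
      using a by blast
  qed
  have "udg n (DM M) = monomial_graph M"
    unfolding udg_char[OF dag] monomial_graph_def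
    by (simp only: key conj_assoc)
  then show ?thesis unfolding UEC_rep_def using dag by blast
qed



definition sumA :: "(nat \<times> nat set) set \<Rightarrow> nat" where
  "sumA M = (\<Sum>p\<in>M. card (snd p))"

lemma case1:
  assumes val: "valid_monomial n M" and iA: "(i, A) \<in> M" and jB: "(j, B) \<in> M" and ji: "j \<noteq> i"
    and cA: "c \<in> A" and cB: "c \<in> B"
  defines "M' \<equiv> (M - {(i, A)}) \<union> {(i, A - {c})}"
  shows "valid_monomial n M' \<and> out_fiber_delete M M' \<and> out_fiber_add M' M
         \<and> card M' = card M \<and> sumA M' < sumA M"
proof -
  note uh = valid_uh[OF val]
  note hn = valid_hn[OF val]
  have fin: "finite M" using val unfolding valid_monomial_def by (elim conjE)
  have notin: "(i, A - {c}) \<notin> M - {(i, A)}"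
  proof
    assume "(i, A - {c}) \<in> M - {(i, A)}"
    then have "A = A - {c}" using uh[OF iA] by blast
    then show False using cA by blast
  qed
  have finA: "finite A" using valid_cov1[OF val iA] by (meson finite_atLeastAtMost finite_insert finite_subset)
  have valid: "valid_monomial n M'" unfolding valid_monomial_def
  proof (intro conjI)
    show "finite M'" unfolding M'_def using fin by simp
    show "\<forall>(k, K)\<in>M'. \<forall>(l, L)\<in>M'. k = l \<longrightarrow> K = L"
    proof (intro ballI, clarify)
      fix k K L assume a: "(k, K) \<in> M'" "(k, L) \<in> M'"
      show "K = L"
      proof (cases "k = i")
        case True
        then have "K = A - {c}" "L = A - {c}" using a uh[OF iA] unfolding M'_def by auto
        then show ?thesis by simp
      next
        case False
        then have "(k, K) \<in> M" "(k, L) \<in> M" using a unfolding M'_def by auto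
        then show ?thesis using uh by blast
      qed
    qed
    show "\<forall>(k, K)\<in>M'. \<forall>(l, L)\<in>M'. k \<notin> L"
    proof (intro ballI, clarify)
      fix k K l L assume a: "(k, K) \<in> M'" "(l, L) \<in> M'" "k \<in> L"
      obtain K' where K': "(k, K') \<in> M" using a(1) iA unfolding M'_def by auto
      obtain L' where L': "(l, L') \<in> M" "L \<subseteq> L'" using a(2) iA unfolding M'_def by auto
      show False using hn[OF K' L'(1)] L'(2) a(3) by blast
    qed
    have cin: "c \<in> (\<Union>(k, K)\<in>M - {(i, A)}. insert k K)"
      using jB ji cB by blast
    have "(\<Union>(k, K)\<in>M'. insert k K) = insert i (A - {c}) \<union> (\<Union>(k, K)\<in>M - {(i, A)}. insert k K)"
      unfolding M'_def by blast
    also have "\<dots> = insert i A \<union> (\<Union>(k, K)\<in>M - {(i, A)}. insert k K)" using cin cA by blast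
    also have "\<dots> = (\<Union>(k, K)\<in>M. insert k K)" using iA by blast
    finally show "(\<Union>(k, K)\<in>M'. insert k K) = {1..n}" using valid_un[OF val] by simp
  qed
  have del: "out_fiber_delete M M'" unfolding out_fiber_delete_def M'_def
    using jB iA ji cA cB by blast
  have bck: "M = (M' - {(i, A - {c})}) \<union> {(i, insert c (A - {c}))}"
  proof -
    have "M' - {(i, A - {c})} = M - {(i, A)}" unfolding M'_def using notin by blast
    moreover have "insert c (A - {c}) = A" using cA by blast
    ultimately show ?thesis using iA by auto
  qed
  have add: "out_fiber_add M' M" unfolding out_fiber_add_def
  proof (intro exI conjI)
    show "(j, B) \<in> M'" unfolding M'_def using jB ji by blast
    show "(i, A - {c}) \<in> M'" unfolding M'_def by blast
    show "j \<noteq> i" by (fact ji)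
    show "c \<in> B - (A - {c})" using cB by blast
    show "M = (M' - {(i, A - {c})}) \<union> {(i, insert c (A - {c}))}" by (fact bck)
  qed
  have M'ins: "M' = insert (i, A - {c}) (M - {(i, A)})" unfolding M'_def by blast
  have cardM': "card M' = card M"
  proof -
    have "card M > 0" using fin iA card_gt_0_iff by blast
    then show ?thesis unfolding M'ins using notin fin iA by simp
  qed
  have "sumA M' = sumA (M - {(i, A)}) + card (A - {c})"
    unfolding sumA_def M'ins using notin fin by simp
  moreover have "sumA M = sumA (M - {(i, A)}) + card A"
    unfolding sumA_def using sum.remove[OF fin iA, of "\<lambda>p. card (snd p)"] by simp
  moreover have "card (A - {c}) < card A" using finA cA by (metis card_Diff1_less)
  ultimately have "sumA M' < sumA M" by simp
  then show ?thesis using valid del add cardM' by blast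
qed

lemma case2:
  assumes val: "valid_monomial n M" and iA: "(i, A) \<in> M" and cA: "c \<in> A"
    and only: "\<forall>(j, B)\<in>M. j \<noteq> i \<longrightarrow> c \<notin> B"
  defines "M' \<equiv> (M - {(i, A)}) \<union> {(i, A - {c}), (c, A - {c})}"
  shows "valid_monomial n M' \<and> split_move M M' \<and> merge_move M' M \<and> card M < card M'"
proof -
  note uh = valid_uh[OF val]
  note hn = valid_hn[OF val]
  have fin: "finite M" using val unfolding valid_monomial_def by (elim conjE)
  have notin1: "(i, A - {c}) \<notin> M - {(i, A)}"
  proof
    assume "(i, A - {c}) \<in> M - {(i, A)}"
    then have "A = A - {c}" using uh[OF iA] by blast
    then show False using cA by blast
  qed
  have nohc: "(c, K) \<notin> M" for K
  proof
    assume "(c, K) \<in> M"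
    then show False using hn[OF _ iA] cA by blast
  qed
  have ic: "i \<noteq> c" using hn[OF iA iA] cA by blast
  have only': "c \<notin> B" if "(j, B) \<in> M" "j \<noteq> i" for j B using only that by blast
  have valid: "valid_monomial n M'" unfolding valid_monomial_def
  proof (intro conjI)
    show "finite M'" unfolding M'_def using fin by simp
    show "\<forall>(k, K)\<in>M'. \<forall>(l, L)\<in>M'. k = l \<longrightarrow> K = L"
    proof (intro ballI, clarify)
      fix k K L assume a: "(k, K) \<in> M'" "(k, L) \<in> M'"
      show "K = L"
      proof (cases "k = i \<or> k = c")
        case True
        then have "K = A - {c}" "L = A - {c}" using a uh[OF iA] nohc ic unfolding M'_def by auto
        then show ?thesis by simp
      next
        case False
        then have "(k, K) \<in> M" "(k, L) \<in> M" using a unfolding M'_def by auto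
        then show ?thesis using uh by blast
      qed
    qed
    show "\<forall>(k, K)\<in>M'. \<forall>(l, L)\<in>M'. k \<notin> L"
    proof (intro ballI, clarify)
      fix k K l L assume a: "(k, K) \<in> M'" "(l, L) \<in> M'" "k \<in> L"
      show False
      proof (cases "k = c")
        case True
        then show False
        proof (cases "l = i \<or> l = c")
          case True
          then have "L = A - {c}" using a(2) uh[OF iA] nohc ic unfolding M'_def by auto
          then show False using a(3) \<open>k = c\<close> by blast
        next
          case False
          then have "(l, L) \<in> M" using a(2) unfolding M'_def by auto
          then show False using only' False a(3) \<open>k = c\<close> by blast
        qed
      next
        case False
        obtain K' where K': "(k, K') \<in> M" using a(1) iA False unfolding M'_def by auto
        obtain l' L' where L': "(l', L') \<in> M" "L \<subseteq> L'" using a(2) iA unfolding M'_def by auto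
        show False using hn[OF K' L'(1)] L'(2) a(3) by blast
      qed
    qed
    have "(\<Union>(k, K)\<in>M'. insert k K) = insert i (A - {c}) \<union> insert c (A - {c}) \<union> (\<Union>(k, K)\<in>M - {(i, A)}. insert k K)"
      unfolding M'_def by blast
    also have "\<dots> = insert i A \<union> (\<Union>(k, K)\<in>M - {(i, A)}. insert k K)" using cA by blast
    also have "\<dots> = (\<Union>(k, K)\<in>M. insert k K)" using iA by blast
    finally show "(\<Union>(k, K)\<in>M'. insert k K) = {1..n}" using valid_un[OF val] by simp
  qed
  have spl: "split_move M M'" unfolding split_move_def M'_def
    using iA cA only by blast
  have bck: "M = (M' - {(i, A - {c}), (c, A - {c})}) \<union> {(i, insert c (A - {c}))}"
  proof -
    have "M' - {(i, A - {c}), (c, A - {c})} = M - {(i, A)}" unfolding M'_def using notin1 nohc by blast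
    moreover have "insert c (A - {c}) = A" using cA by blast
    ultimately show ?thesis using iA by auto
  qed
  have mrg: "merge_move M' M" unfolding merge_move_def
  proof (intro exI conjI)
    show "(i, A - {c}) \<in> M'" "(c, A - {c}) \<in> M'" unfolding M'_def by blast+
    show "i \<noteq> c" by (fact ic)
    show "M = (M' - {(i, A - {c}), (c, A - {c})}) \<union> {(i, insert c (A - {c}))}" by (fact bck)
  qed
  have M'ins: "M' = insert (i, A - {c}) (insert (c, A - {c}) (M - {(i, A)}))" unfolding M'_def by blast
  have cardM': "card M' = Suc (card M)"
  proof -
    have "card M > 0" using fin iA card_gt_0_iff by blast
    moreover have "(c, A - {c}) \<notin> M - {(i, A)}" using nohc by blast
    moreover have "(i, A - {c}) \<notin> insert (c, A - {c}) (M - {(i, A)})" using notin1 ic by blast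
    ultimately show ?thesis unfolding M'ins using fin iA by simp
  qed
  then show ?thesis using valid spl mrg by simp
qed



definition stepR :: "nat \<Rightarrow> nat set set \<Rightarrow> nat set set \<Rightarrow> bool" where
  "stepR n U V \<longleftrightarrow> UEC_rep n U \<and> UEC_rep n V
     \<and> (\<exists>M M'. monomial_rep n M U \<and> monomial_rep n M' V \<and> single_move M M')"

lemma path_list:
  assumes "(stepR n)\<^sup>*\<^sup>* U V" "UEC_rep n U"
  shows "\<exists>Us :: nat set set list. Us \<noteq> [] \<and> hd Us = U \<and> last Us = V
           \<and> (\<forall>V\<in>set Us. UEC_rep n V)
           \<and> (\<forall>t. Suc t < length Us \<longrightarrow>
                (\<exists>M M'. monomial_rep n M (Us ! t) \<and> monomial_rep n M' (Us ! Suc t)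
                        \<and> single_move M M'))"
  using assms(1)
proof (induction rule: rtranclp_induct)
  case base
  then show ?case using assms(2) by (intro exI[of _ "[U]"]) simp
next
  case (step y z)
  then obtain Us where Us: "Us \<noteq> []" "hd Us = U" "last Us = y" "\<forall>V\<in>set Us. UEC_rep n V"
    "\<forall>t. Suc t < length Us \<longrightarrow>
                (\<exists>M M'. monomial_rep n M (Us ! t) \<and> monomial_rep n M' (Us ! Suc t)
                        \<and> single_move M M')" by blast
  have sz: "UEC_rep n z" "\<exists>M M'. monomial_rep n M y \<and> monomial_rep n M' z \<and> single_move M M'"
    using step(2) unfolding stepR_def by blast+
  have "\<forall>t. Suc t < length (Us @ [z]) \<longrightarrow>
                (\<exists>M M'. monomial_rep n M ((Us @ [z]) ! t) \<and> monomial_rep n M' ((Us @ [z]) ! Suc t)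
                        \<and> single_move M M')"
  proof (intro allI impI)
    fix t assume t: "Suc t < length (Us @ [z])"
    show "\<exists>M M'. monomial_rep n M ((Us @ [z]) ! t) \<and> monomial_rep n M' ((Us @ [z]) ! Suc t) \<and> single_move M M'"
    proof (cases "Suc t < length Us")
      case True
      then show ?thesis using Us(5) by (simp add: nth_append)
    next
      case False
      then have st: "Suc t = length Us" using t by simp
      then have "Us ! t = y" using Us(1,3) by (metis diff_Suc_1 last_conv_nth)
      then show ?thesis using st sz(2) by (simp add: nth_append)
    qed
  qed
  then show ?case using Us sz(1) by (intro exI[of _ "Us @ [z]"]) auto
qed

lemma graph_empty: "(\<forall>(i, A)\<in>M. A = {}) \<Longrightarrow> monomial_graph M = {}"
  unfolding monomial_graph_def by auto

lemma card_le: assumes val: "valid_monomial n M" shows "card M \<le> n"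
proof -
  have inj: "inj_on fst M" unfolding inj_on_def
  proof (intro ballI impI)
    fix p q assume "p \<in> M" "q \<in> M" "fst p = fst q"
    then show "p = q" using valid_uh[OF val, of "fst p" "snd p" "snd q"] by (metis prod.collapse)
  qed
  have "fst ` M \<subseteq> {1..n}" using valid_cov1[OF val] by force
  then have "card (fst ` M) \<le> n" using card_mono[of "{1..n}" "fst ` M"] by simp
  then show ?thesis using card_image[OF inj] by simp
qed

lemma to_empty:
  assumes "valid_monomial n M"
  shows "(stepR n)\<^sup>*\<^sup>* (monomial_graph M) {} \<and> (stepR n)\<^sup>*\<^sup>* {} (monomial_graph M)"
  using assms
proof (induction M rule: wf_induct_rule[OF wf_inv_image[OF wf_lex_prod[OF wf_less_than wf_less_than], of "\<lambda>M. (n - card M, sumA M)"]])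
  case (1 M)
  note val = "1.prems"
  have pair: "(stepR n)\<^sup>*\<^sup>* (monomial_graph M) {} \<and> (stepR n)\<^sup>*\<^sup>* {} (monomial_graph M)"
    if v': "valid_monomial n M'" and m1: "single_move M M'" and m2: "single_move M' M"
      and dec: "(M', M) \<in> inv_image (less_than <*lex*> less_than) (\<lambda>M. (n - card M, sumA M))" for M'
  proof -
    have IH: "(stepR n)\<^sup>*\<^sup>* (monomial_graph M') {} \<and> (stepR n)\<^sup>*\<^sup>* {} (monomial_graph M')"
      using "1.IH"[OF dec v'] .
    have s1: "stepR n (monomial_graph M) (monomial_graph M')"
      unfolding stepR_def monomial_rep_def using mono_UEC[OF val] mono_UEC[OF v'] val v' m1 by blast
    have s2: "stepR n (monomial_graph M') (monomial_graph M)"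
      unfolding stepR_def monomial_rep_def using mono_UEC[OF val] mono_UEC[OF v'] val v' m2 by blast
    show ?thesis using IH s1 s2
      by (meson converse_rtranclp_into_rtranclp rtranclp.rtrancl_into_rtrancl)
  qed
  show ?case
  proof (cases "\<forall>(i, A)\<in>M. A = {}")
    case True
    then show ?thesis using graph_empty by simp
  next
    case False
    then obtain i A c where iA: "(i, A) \<in> M" "c \<in> A" by fast
    show ?thesis
    proof (cases "\<exists>j B. (j, B) \<in> M \<and> j \<noteq> i \<and> c \<in> B")
      case True
      then obtain j B where jB: "(j, B) \<in> M" "j \<noteq> i" "c \<in> B" by blast
      define M' where "M' = (M - {(i, A)}) \<union> {(i, A - {c})}"
      have r: "valid_monomial n M' \<and> out_fiber_delete M M' \<and> out_fiber_add M' M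
         \<and> card M' = card M \<and> sumA M' < sumA M"
        unfolding M'_def by (rule case1[OF val iA(1) jB(1) jB(2) iA(2) jB(3)])
      have dec: "(M', M) \<in> inv_image (less_than <*lex*> less_than) (\<lambda>M. (n - card M, sumA M))" using r by simp
      have "single_move M M'" "single_move M' M" using r unfolding single_move_def by blast+
      then show ?thesis using pair[of M'] r dec by blast
    next
      case False
      then have only: "\<forall>(j, B)\<in>M. j \<noteq> i \<longrightarrow> c \<notin> B" by blast
      define M' where "M' = (M - {(i, A)}) \<union> {(i, A - {c}), (c, A - {c})}"
      have r: "valid_monomial n M' \<and> split_move M M' \<and> merge_move M' M \<and> card M < card M'"
        unfolding M'_def by (rule case2[OF val iA only])
      have "card M' \<le> n" using card_le r by blast
      then have "n - card M' < n - card M" using r by linarith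
      then have dec: "(M', M) \<in> inv_image (less_than <*lex*> less_than) (\<lambda>M. (n - card M, sumA M))" by simp
      have "single_move M M'" "single_move M' M" using r unfolding single_move_def by blast+
      then show ?thesis using pair[of M'] r dec by blast
    qed
  qed
qed

theorem theorem4p6:
  fixes n :: nat and U U' :: "nat set set"
  assumes "UEC_rep n U" and "UEC_rep n U'"
  shows "\<exists>Us :: nat set set list. Us \<noteq> [] \<and> hd Us = U \<and> last Us = U'
           \<and> (\<forall>V\<in>set Us. UEC_rep n V)
           \<and> (\<forall>t. Suc t < length Us \<longrightarrow>
                (\<exists>M M'. monomial_rep n M (Us ! t) \<and> monomial_rep n M' (Us ! Suc t)
                        \<and> single_move M M'))"
proof -
  obtain M where M: "valid_monomial n M" "monomial_graph M = U" using UEC_to_mono[OF assms(1)] by blast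
  obtain M' where M': "valid_monomial n M'" "monomial_graph M' = U'" using UEC_to_mono[OF assms(2)] by blast
  have "(stepR n)\<^sup>*\<^sup>* U {}" using to_empty[OF M(1)] M(2) by blast
  moreover have "(stepR n)\<^sup>*\<^sup>* {} U'" using to_empty[OF M'(1)] M'(2) by blast
  ultimately have "(stepR n)\<^sup>*\<^sup>* U U'" by (rule rtranclp_trans)
  then show ?thesis by (rule path_list[OF _ assms(1)])
qed

end
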